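(* Let $T\in V$ be a target variable. If $\Upsilon$ is conservative, then the set $cpc(T)$ output by the MIPC procedure on input $D_1,\dots,D_n$ and $T$ contains all parents and children of $T$ in $G$, i.e. $pa(T)\cup ch(T)\subseteq cpc(T)$.
   Context: Let $G=(V,E)$ be a DAG (causal Bayesian network) over a finite set $V$ of random variables with joint distribution $P$ satisfying the Markov condition with respect to $G$; causal sufficiency is assumed. $pa(T)$ and $ch(T)$ are the parents and children of $T$ in $G$. There are $n\ge 1$ intervention experiments; in the $i$-th, the set $\Upsilon_i\subseteq V$ (possibly empty) is manipulated, and $\Upsilon=\{\Upsilon_1,\dots,\Upsilon_n\}$ (unknown to the procedure). The post-intervention DAG is $G_i=(V,E_i)$ with $E_i=\{(a,b)\in E: b\notin\Upsilon_i\}$, with distribution $P_i(V)=\prod_{V_j\notin\Upsilon_i}P(V_j\mid pa(V_j))\prod_{V_j\in\Upsilon_i}P_i(V_j)$, and $D_i$ is a dataset drawn from $P_i$. It is assumed that each $P_i$ is faithful to $G_i$ and that conditional independence tests on $D_i$ are reliable, i.e. "$X\perp T\mid S$ in $D_i$" holds exactly when it holds in $P_i$. $\Upsilon$ is conservative if for every $V_j\in\bigcup_i\Upsilon_i$ there exists $i$ with $V_j\notin\Upsilon_i$. The MIPC procedure: Phase 1. Initialize $cpc(T)=\emptyset$, $cmb_i(T)=\emptyset$ for all $i$, $ipc(T)=\emptyset$. For each $V_j\in V\setminus\{T\}$ and each $i$, if $V_j$ and $T$ are (marginally) dependent in $D_i$, add $V_j$ to $cpc(T)$ and to $cmb_i(T)$.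 Phase 2. Process the variables $V_j\in cpc(T)$ one at a time. If there exist a nonempty $S\subseteq ipc(T)$ and an index $k$ with $V_j\in cmb_k(T)$, $S\subseteq cmb_k(T)$ and $T\perp V_j\mid S$ in $D_k$, then remove $V_j$ from every $cmb_i(T)$ and proceed to the next variable. Otherwise add $V_j$ to $ipc(T)$, and then for each $Y\in ipc(T)\setminus\{V_j\}$: if there exist a nonempty $S\subseteq ipc(T)\setminus\{Y\}$ and an index $k$ with $Y\in cmb_k(T)$, $S\subseteq cmb_k(T)$ and $T\perp Y\mid S$ in $D_k$, remove $Y$ from $ipc(T)$ and from every $cmb_h(T)$ containing it. After all variables of $cpc(T)$ have been processed, the procedure sets and outputs $cpc(T)=ipc(T)$. *)

theory Defs
  imports Main
begin

definition is_dag :: "'v set \<Rightarrow> ('v \<times> 'v) set \<Rightarrow> bool" where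
  "is_dag V E \<longleftrightarrow> finite V \<and> E \<subseteq> V \<times> V \<and> acyclic E"

definition parents :: "('v \<times> 'v) set \<Rightarrow> 'v \<Rightarrow> 'v set" where
  "parents E T = {a. (a, T) \<in> E}"

definition children :: "('v \<times> 'v) set \<Rightarrow> 'v \<Rightarrow> 'v set" where
  "children E T = {b. (T, b) \<in> E}"

text \<open>Edge set of the post-intervention DAG: edges into manipulated variables are removed.\<close>
definition intervened_edges :: "('v \<times> 'v) set \<Rightarrow> 'v set \<Rightarrow> ('v \<times> 'v) set" where
  "intervened_edges E U = {(a, b) \<in> E. b \<notin> U}"

definition is_trail :: "'v set \<Rightarrow> ('v \<times> 'v) set \<Rightarrow> 'v list \<Rightarrow> 'v \<Rightarrow> 'v \<Rightarrow> bool" where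
  "is_trail V E p X Y \<longleftrightarrow> length p \<ge> 2 \<and> distinct p \<and> hd p = X \<and> last p = Y \<and>
     set p \<subseteq> V \<and>
     (\<forall>k. Suc k < length p \<longrightarrow> ((p ! k, p ! Suc k) \<in> E \<or> (p ! Suc k, p ! k) \<in> E))"

definition active_trail :: "('v \<times> 'v) set \<Rightarrow> 'v set \<Rightarrow> 'v list \<Rightarrow> bool" where
  "active_trail E Z p \<longleftrightarrow>
     (\<forall>k. 0 < k \<and> Suc k < length p \<longrightarrow>
        (if (p ! (k - 1), p ! k) \<in> E \<and> (p ! Suc k, p ! k) \<in> E
         then (\<exists>d \<in> Z. (p ! k, d) \<in> E\<^sup>*)
         else p ! k \<notin> Z))"

definition d_separated :: "'v set \<Rightarrow> ('v \<times> 'v) set \<Rightarrow> 'v \<Rightarrow> 'v \<Rightarrow> 'v set \<Rightarrow> bool" where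
  "d_separated V E X Y Z \<longleftrightarrow> \<not> (\<exists>p. is_trail V E p X Y \<and> active_trail E Z p)"

text \<open>indep k X Y S means: X is independent of Y given S in dataset D_k.\<close>

definition mipc_sep ::
  "nat set \<Rightarrow> (nat \<Rightarrow> 'v \<Rightarrow> 'v \<Rightarrow> 'v set \<Rightarrow> bool) \<Rightarrow> 'v \<Rightarrow> 'v set \<Rightarrow> (nat \<Rightarrow> 'v set) \<Rightarrow> 'v \<Rightarrow> bool" where
  "mipc_sep I indep T A cmb Y \<longleftrightarrow>
     (\<exists>S k. S \<noteq> {} \<and> S \<subseteq> A \<and> k \<in> I \<and> Y \<in> cmb k \<and> S \<subseteq> cmb k \<and> indep k T Y S)"

text \<open>Inner loop of Phase 2 (over the members Y of ipc(T) other than the newly added V_j,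
  in the order given by the list).\<close>
fun mipc_inner ::
  "nat set \<Rightarrow> (nat \<Rightarrow> 'v \<Rightarrow> 'v \<Rightarrow> 'v set \<Rightarrow> bool) \<Rightarrow> 'v \<Rightarrow> 'v list \<Rightarrow>
   'v set \<times> (nat \<Rightarrow> 'v set) \<Rightarrow> 'v set \<times> (nat \<Rightarrow> 'v set)" where
  "mipc_inner I indep T [] st = st"
| "mipc_inner I indep T (Y # ys) (ipc, cmb) =
     mipc_inner I indep T ys
       (if mipc_sep I indep T (ipc - {Y}) cmb Y
        then (ipc - {Y}, \<lambda>h. cmb h - {Y}) else (ipc, cmb))"

text \<open>Phase 2 as a (nondeterministic in the processing orders) run relation:
  mipc_phase2 I indep T R (ipc, cmb) st' means that processing the remaining
  candidates R from state (ipc, cmb), in some order, can end in state st'.\<close>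
inductive mipc_phase2 ::
  "nat set \<Rightarrow> (nat \<Rightarrow> 'v \<Rightarrow> 'v \<Rightarrow> 'v set \<Rightarrow> bool) \<Rightarrow> 'v \<Rightarrow> 'v set \<Rightarrow>
   'v set \<times> (nat \<Rightarrow> 'v set) \<Rightarrow> 'v set \<times> (nat \<Rightarrow> 'v set) \<Rightarrow> bool"
  for I indep T where
  finish: "mipc_phase2 I indep T {} st st"
| drop: "\<lbrakk> Vj \<in> R; mipc_sep I indep T ipc cmb Vj;
           mipc_phase2 I indep T (R - {Vj}) (ipc, \<lambda>i. cmb i - {Vj}) st' \<rbrakk>
         \<Longrightarrow> mipc_phase2 I indep T R (ipc, cmb) st'"
| add: "\<lbrakk> Vj \<in> R; \<not> mipc_sep I indep T ipc cmb Vj; distinct ys; set ys = ipc;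
          mipc_phase2 I indep T (R - {Vj}) (mipc_inner I indep T ys (insert Vj ipc, cmb)) st' \<rbrakk>
        \<Longrightarrow> mipc_phase2 I indep T R (ipc, cmb) st'"

definition mipc_cmb0 :: "'v set \<Rightarrow> (nat \<Rightarrow> 'v \<Rightarrow> 'v \<Rightarrow> 'v set \<Rightarrow> bool) \<Rightarrow> 'v \<Rightarrow> nat \<Rightarrow> 'v set" where
  "mipc_cmb0 V indep T i = {Vj \<in> V - {T}. \<not> indep i T Vj {}}"

definition mipc_cpc0 :: "'v set \<Rightarrow> nat set \<Rightarrow> (nat \<Rightarrow> 'v \<Rightarrow> 'v \<Rightarrow> 'v set \<Rightarrow> bool) \<Rightarrow> 'v \<Rightarrow> 'v set" where
  "mipc_cpc0 V I indep T = {Vj \<in> V - {T}. \<exists>i \<in> I. \<not> indep i T Vj {}}"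

text \<open>out is a possible output cpc(T) of MIPC (for some processing order).\<close>
definition mipc_output :: "'v set \<Rightarrow> nat set \<Rightarrow> (nat \<Rightarrow> 'v \<Rightarrow> 'v \<Rightarrow> 'v set \<Rightarrow> bool) \<Rightarrow> 'v \<Rightarrow> 'v set \<Rightarrow> bool" where
  "mipc_output V I indep T out \<longleftrightarrow>
     (\<exists>cmb'. mipc_phase2 I indep T (mipc_cpc0 V I indep T) ({}, mipc_cmb0 V indep T) (out, cmb'))"

definition conservative :: "nat set \<Rightarrow> (nat \<Rightarrow> 'v set) \<Rightarrow> bool" where
  "conservative I Ups \<longleftrightarrow> (\<forall>v \<in> (\<Union>i\<in>I. Ups i). \<exists>i \<in> I. v \<notin> Ups i)"

end

theory Submission
  imports Defs
begin

lemma fwd_edges: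
  assumes adj: "\<forall>k. Suc k < length p \<longrightarrow> ((p ! k, p ! Suc k) \<in> F \<or> (p ! Suc k, p ! k) \<in> F)"
    and nc: "\<forall>k. 0 < k \<and> Suc k < length p \<longrightarrow> \<not> ((p ! (k - 1), p ! k) \<in> F \<and> (p ! Suc k, p ! k) \<in> F)"
    and first: "(p ! 0, p ! 1) \<in> F"
  shows "Suc j < length p \<Longrightarrow> (p ! j, p ! Suc j) \<in> F"
proof (induction j)
  case 0 then show ?case using first by simp
next
  case (Suc j)
  then have ih: "(p ! j, p ! Suc j) \<in> F" by simp
  from nc[rule_format, of "Suc j"] Suc.prems ih have "(p ! Suc (Suc j), p ! Suc j) \<notin> F" by auto
  then show ?case using adj[rule_format, of "Suc j"] Suc.prems by auto
qed

lemma bwd_edges: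
  assumes adj: "\<forall>k. Suc k < length p \<longrightarrow> ((p ! k, p ! Suc k) \<in> F \<or> (p ! Suc k, p ! k) \<in> F)"
    and nc: "\<forall>k. 0 < k \<and> Suc k < length p \<longrightarrow> \<not> ((p ! (k - 1), p ! k) \<in> F \<and> (p ! Suc k, p ! k) \<in> F)"
    and lst: "length p \<ge> 2" "(p ! (length p - 1), p ! (length p - 2)) \<in> F"
  shows "Suc j < length p \<Longrightarrow> (p ! Suc j, p ! j) \<in> F"
proof (induction "length p - Suc (Suc j)" arbitrary: j)
  case 0
  then have "j = length p - 2" by simp
  then show ?case using lst by (simp add: numeral_2_eq_2 Suc_diff_Suc)
next
  case (Suc d)
  then have ih: "(p ! Suc (Suc j), p ! Suc j) \<in> F" by (metis Suc_diff_Suc diff_Suc_1 zero_less_Suc zero_less_diff)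
  have "Suc (Suc j) < length p" using Suc by simp
  with nc[rule_format, of "Suc j"] ih have "(p ! j, p ! Suc j) \<notin> F" by auto
  then show ?case using adj[rule_format, of j] Suc.prems by auto
qed

lemma fwd_path:
  assumes "\<And>j. Suc j < length p \<Longrightarrow> (p ! j, p ! Suc j) \<in> F"
  shows "j < length p \<Longrightarrow> (p ! 0, p ! j) \<in> F\<^sup>*"
proof (induction j)
  case 0 then show ?case by simp
next
  case (Suc j) then show ?case using assms[of j] by (meson Suc_lessD rtrancl.rtrancl_into_rtrancl)
qed

lemma bwd_path:
  assumes "\<And>j. Suc j < length p \<Longrightarrow> (p ! Suc j, p ! j) \<in> F"
  shows "j < length p \<Longrightarrow> (p ! j, p ! 0) \<in> F\<^sup>*"
proof (induction j)
  case 0 then show ?case by simp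
next
  case (Suc j) then show ?case using assms[of j] by (meson Suc_lessD converse_rtrancl_into_rtrancl)
qed

lemma adj_of_dep:
  assumes dag: "is_dag V E"
    and xt: "(X,T) \<in> E \<or> (T,X) \<in> E"
    and tr: "is_trail V (intervened_edges E U) p T X"
    and act: "active_trail (intervened_edges E U) {} p"
  shows "(X,T) \<in> intervened_edges E U \<or> (T,X) \<in> intervened_edges E U"
proof (rule ccontr)
  assume nadj: "\<not> ?thesis"
  define F where "F = intervened_edges E U"
  have FE: "F \<subseteq> E" unfolding F_def intervened_edges_def by auto
  have adj: "\<forall>k. Suc k < length p \<longrightarrow> ((p ! k, p ! Suc k) \<in> F \<or> (p ! Suc k, p ! k) \<in> F)"
    using tr unfolding is_trail_def F_def by auto
  have nc: "\<forall>k. 0 < k \<and> Suc k < length p \<longrightarrow> \<not> ((p ! (k - 1), p ! k) \<in> F \<and> (p ! Suc k, p ! k) \<in> F)"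
  proof (intro allI impI)
    fix k assume "0 < k \<and> Suc k < length p"
    with act have "(if (p ! (k - 1), p ! k) \<in> F \<and> (p ! Suc k, p ! k) \<in> F
         then (\<exists>d \<in> {}. (p ! k, d) \<in> F\<^sup>*) else p ! k \<notin> {})"
      unfolding active_trail_def F_def by blast
    then show "\<not> ((p ! (k - 1), p ! k) \<in> F \<and> (p ! Suc k, p ! k) \<in> F)"
      by (simp split: if_splits)
  qed
  have len: "length p \<ge> 2" using tr unfolding is_trail_def by auto
  then have pne: "p \<noteq> []" by auto
  have h: "p ! 0 = T" and l: "p ! (length p - 1) = X"
    using tr pne unfolding is_trail_def by (auto simp: hd_conv_nth last_conv_nth)
  have acy: "acyclic E" using dag unfolding is_dag_def by simp
  have intoF: "(a, b) \<in> E \<Longrightarrow> b \<notin> U \<Longrightarrow> (a,b) \<in> F" for a b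
    unfolding F_def intervened_edges_def by simp
  have notinto: "(a, b) \<in> F \<Longrightarrow> b \<notin> U" for a b
    unfolding F_def intervened_edges_def by simp
  show False
  proof (cases "(X,T) \<in> E")
    case True
    then have TU: "T \<in> U" using nadj intoF F_def by blast
    have "(p ! 1, p ! 0) \<notin> F" using notinto TU h by blast
    then have "(p ! 0, p ! 1) \<in> F" using adj[rule_format, of 0] len by auto
    then have allf: "\<And>j. Suc j < length p \<Longrightarrow> (p ! j, p ! Suc j) \<in> F"
      using fwd_edges[OF adj nc] by blast
    have "(p ! 0, p ! (length p - 1)) \<in> F\<^sup>*" using fwd_path[of p F "length p - 1", OF allf] len by simp
    then have "(T, X) \<in> E\<^sup>*" using h l rtrancl_mono[OF FE] by auto
    then have "(X, X) \<in> E\<^sup>+" using True by (meson rtrancl_into_trancl2)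
    then show False using acy unfolding acyclic_def by blast
  next
    case False
    then have TX: "(T,X) \<in> E" using xt by simp
    then have XU: "X \<in> U" using nadj intoF F_def by blast
    have "(p ! (length p - 2), p ! (length p - 1)) \<notin> F" using notinto XU l by blast
    moreover have eq: "Suc (length p - 2) = length p - 1" using len by simp
    moreover have "(p ! (length p - 2), p ! Suc (length p - 2)) \<in> F \<or> (p ! Suc (length p - 2), p ! (length p - 2)) \<in> F"
      using adj[rule_format, of "length p - 2"] len eq by linarith
    ultimately have "(p ! (length p - 1), p ! (length p - 2)) \<in> F" by simp
    then have allf: "\<And>j. Suc j < length p \<Longrightarrow> (p ! Suc j, p ! j) \<in> F"
      using bwd_edges[OF adj nc len] by blast
    have "(p ! (length p - 1), p ! 0) \<in> F\<^sup>*" using bwd_path[of p F "length p - 1", OF allf] len by simp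
    then have "(X, T) \<in> E\<^sup>*" using h l rtrancl_mono[OF FE] by auto
    then have "(T, T) \<in> E\<^sup>+" using TX by (meson rtrancl_into_trancl2)
    then show False using acy unfolding acyclic_def by blast
  qed
qed

lemma adj_not_dsep:
  assumes "T \<in> V" "X \<in> V" "T \<noteq> X" "(X,T) \<in> F \<or> (T,X) \<in> F"
  shows "\<not> d_separated V F T X S"
proof -
  have "is_trail V F [T, X] T X" using assms unfolding is_trail_def
    by (auto simp: less_Suc_eq)
  moreover have "active_trail F S [T, X]" unfolding active_trail_def by auto
  ultimately show ?thesis unfolding d_separated_def by blast
qed

lemma nosep:
  assumes "\<forall>k\<in>I. cmb k \<subseteq> C k"
    and good: "\<forall>k\<in>I. \<forall>S. X \<in> C k \<longrightarrow> S \<subseteq> C k \<longrightarrow> X \<notin> S \<longrightarrow> \<not> indep k T X S"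
    and "X \<notin> A"
  shows "\<not> mipc_sep I indep T A cmb X"
proof
  assume "mipc_sep I indep T A cmb X"
  then obtain S k where Sk: "S \<subseteq> A" "k \<in> I" "X \<in> cmb k" "S \<subseteq> cmb k" "indep k T X S"
    unfolding mipc_sep_def by blast
  have "cmb k \<subseteq> C k" using assms(1) Sk(2) by blast
  then have "X \<in> C k" "S \<subseteq> C k" "X \<notin> S" using Sk assms(3) by auto
  then show False using good Sk by blast
qed

lemma inner_sub:
  "fst (mipc_inner I indep T ys (ipc, cmb)) \<subseteq> ipc \<and> (\<forall>k. snd (mipc_inner I indep T ys (ipc, cmb)) k \<subseteq> cmb k)"
proof (induction ys arbitrary: ipc cmb)
  case Nil then show ?case by simp
next
  case (Cons Y ys)
  show ?case
  proof (cases "mipc_sep I indep T (ipc - {Y}) cmb Y")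
    case True then show ?thesis using Cons[of "ipc - {Y}" "\<lambda>h. cmb h - {Y}"] by auto
  next
    case False then show ?thesis using Cons[of ipc cmb] by auto
  qed
qed

lemma inner_keep:
  assumes good: "\<forall>k\<in>I. \<forall>S. X \<in> C k \<longrightarrow> S \<subseteq> C k \<longrightarrow> X \<notin> S \<longrightarrow> \<not> indep k T X S"
  shows "X \<in> ipc \<Longrightarrow> \<forall>k\<in>I. cmb k \<subseteq> C k \<Longrightarrow> X \<in> fst (mipc_inner I indep T ys (ipc, cmb))"
proof (induction ys arbitrary: ipc cmb)
  case Nil then show ?case by simp
next
  case (Cons Y ys)
  show ?case
  proof (cases "mipc_sep I indep T (ipc - {Y}) cmb Y")
    case True
    have "X \<noteq> Y"
    proof
      assume "X = Y"
      then have "\<not> mipc_sep I indep T (ipc - {Y}) cmb Y"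
        using nosep[where I=I and cmb=cmb and C=C and X=X and indep=indep and T=T and A="ipc - {Y}"] Cons.prems(2) good by simp
      then show False using True by simp
    qed
    then show ?thesis using True Cons.IH[of "ipc - {Y}" "\<lambda>h. cmb h - {Y}"] Cons.prems by auto
  next
    case False then show ?thesis using Cons by auto
  qed
qed

lemma phase2_keep:
  assumes "mipc_phase2 I indep T R st st'"
    and good: "\<forall>k\<in>I. \<forall>S. X \<in> C k \<longrightarrow> S \<subseteq> C k \<longrightarrow> X \<notin> S \<longrightarrow> \<not> indep k T X S"
  shows "fst st \<inter> R = {} \<Longrightarrow> (\<forall>k\<in>I. snd st k \<subseteq> C k) \<Longrightarrow> X \<in> R \<union> fst st \<Longrightarrow> X \<in> fst st'"
  using assms(1)
proof (induction rule: mipc_phase2.induct)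
  case (finish st) then show ?case by simp
next
  case (drop Vj R ipc cmb st')
  have "X \<noteq> Vj"
  proof
    assume "X = Vj"
    then have "X \<notin> ipc" using drop by auto
    then show False using nosep[where I=I and cmb=cmb and C=C and X=X and indep=indep and T=T and A=ipc] good drop \<open>X = Vj\<close> by auto
  qed
  then show ?case using drop by auto
next
  case (add Vj R ipc cmb ys st')
  obtain ipc' cmb' where st: "mipc_inner I indep T ys (insert Vj ipc, cmb) = (ipc', cmb')"
    by (cases "mipc_inner I indep T ys (insert Vj ipc, cmb)")
  have s: "ipc' \<subseteq> insert Vj ipc" "\<forall>k. cmb' k \<subseteq> cmb k"
    using inner_sub[of I indep T ys "insert Vj ipc" cmb] st by auto
  have k: "X \<in> insert Vj ipc \<Longrightarrow> X \<in> ipc'"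
    using inner_keep[where I=I and C=C and X=X and indep=indep and T=T and ipc="insert Vj ipc" and cmb=cmb and ys=ys] good st add.prems by auto
  have "fst (ipc', cmb') \<inter> (R - {Vj}) = {}" using s add.prems by auto
  moreover have "\<forall>k\<in>I. snd (ipc', cmb') k \<subseteq> C k" using s add.prems by fastforce
  moreover have "X \<in> (R - {Vj}) \<union> fst (ipc', cmb')" using k add.prems by auto
  ultimately show ?case using add.IH st by simp
qed

theorem theorem13:
  fixes V :: "'v set" and E :: "('v \<times> 'v) set" and n :: nat
    and Ups :: "nat \<Rightarrow> 'v set"
    and indep :: "nat \<Rightarrow> 'v \<Rightarrow> 'v \<Rightarrow> 'v set \<Rightarrow> bool"
    and T :: 'v and out :: "'v set"
  assumes dag: "is_dag V E"
    and n: "n \<ge> 1"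
    and ups: "\<forall>i \<in> {1..n}. Ups i \<subseteq> V"
    and faithful_markov: "\<forall>i \<in> {1..n}. \<forall>X Y S. X \<in> V \<longrightarrow> Y \<in> V \<longrightarrow> X \<noteq> Y \<longrightarrow> S \<subseteq> V \<longrightarrow>
            X \<notin> S \<longrightarrow> Y \<notin> S \<longrightarrow>
            (indep i X Y S \<longleftrightarrow> d_separated V (intervened_edges E (Ups i)) X Y S)"
    and T: "T \<in> V"
    and cons: "conservative {1..n} Ups"
    and out: "mipc_output V {1..n} indep T out"
  shows "parents E T \<union> children E T \<subseteq> out"
proof
  fix X assume "X \<in> parents E T \<union> children E T"
  then have xt: "(X,T) \<in> E \<or> (T,X) \<in> E" unfolding parents_def children_def by auto
  have EV: "E \<subseteq> V \<times> V" and acy: "acyclic E" using dag unfolding is_dag_def by auto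
  have XV: "X \<in> V" using xt EV by auto
  have XT: "X \<noteq> T" using xt acy unfolding acyclic_def by auto
  define C where "C = mipc_cmb0 V indep T"
  have good: "\<forall>k\<in>{1..n}. \<forall>S. X \<in> C k \<longrightarrow> S \<subseteq> C k \<longrightarrow> X \<notin> S \<longrightarrow> \<not> indep k T X S"
  proof (intro ballI allI impI)
    fix k S assume k: "k \<in> {1..n}" and XC: "X \<in> C k" and SC: "S \<subseteq> C k" and XS: "X \<notin> S"
    have dep: "\<not> indep k T X {}" using XC unfolding C_def mipc_cmb0_def by auto
    have SV: "S \<subseteq> V" "T \<notin> S" using SC unfolding C_def mipc_cmb0_def by auto
    have "\<not> d_separated V (intervened_edges E (Ups k)) T X {}"
      using dep faithful_markov k T XV XT by auto
    then obtain p where "is_trail V (intervened_edges E (Ups k)) p T X"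
      "active_trail (intervened_edges E (Ups k)) {} p"
      unfolding d_separated_def by blast
    then have "(X,T) \<in> intervened_edges E (Ups k) \<or> (T,X) \<in> intervened_edges E (Ups k)"
      using adj_of_dep[OF dag xt] by blast
    then have "\<not> d_separated V (intervened_edges E (Ups k)) T X S"
      using adj_not_dsep[OF T XV] XT by metis
    then show "\<not> indep k T X S" using faithful_markov k T XV XT SV XS by auto
  qed
  have cpc: "X \<in> mipc_cpc0 V {1..n} indep T"
  proof -
    obtain i where i: "i \<in> {1..n}" "(X,T) \<in> intervened_edges E (Ups i) \<or> (T,X) \<in> intervened_edges E (Ups i)"
    proof (cases "(X,T) \<in> E")
      case True
      obtain i where "i \<in> {1..n}" "T \<notin> Ups i"
      proof (cases "T \<in> (\<Union>i\<in>{1..n}. Ups i)")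
        case True then show ?thesis using cons that unfolding conservative_def by blast
      next
        case False then show ?thesis using that n by auto
      qed
      then show ?thesis using that True unfolding intervened_edges_def by blast
    next
      case False
      then have TX: "(T,X) \<in> E" using xt by simp
      obtain i where "i \<in> {1..n}" "X \<notin> Ups i"
      proof (cases "X \<in> (\<Union>i\<in>{1..n}. Ups i)")
        case True then show ?thesis using cons that unfolding conservative_def by blast
      next
        case False then show ?thesis using that n by auto
      qed
      then show ?thesis using that TX unfolding intervened_edges_def by blast
    qed
    have "\<not> d_separated V (intervened_edges E (Ups i)) T X {}"
      using adj_not_dsep[OF T XV] XT i(2) by metis
    then have "\<not> indep i T X {}" using faithful_markov i(1) T XV XT by auto
    then show ?thesis unfolding mipc_cpc0_def using XV XT i(1) by auto
  qed
  obtain cmb' where run: "mipc_phase2 {1..n} indep T (mipc_cpc0 V {1..n} indep T) ({}, mipc_cmb0 V indep T) (out, cmb')"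
    using out unfolding mipc_output_def by blast
  have "X \<in> fst (out, cmb')"
    using phase2_keep[OF run good] cpc unfolding C_def by auto
  then show "X \<in> out" by simp
qed

end
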